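(* In the setting described in the context, suppose $(\eta^{l,n+1})_{l=1}^M$, $\psi^{n+1}$, $\xi^{n+1}$ (real grid functions) satisfy Scheme II given $(\eta^{l,n})_l$, $\psi^n$, $\xi^n$. Set $c^{l,m}=e^{\eta^{l,m}}$, $T^m=e^{\xi^m}$ for $m=n,n+1$. Then: (1) (mass conservation) $(e^{\eta^{l,n+1}},1)=(e^{\eta^{l,n}},1)$ for $l=1,\dots,M$; (2) (positivity) $c^{l,n+1}_i>0$ and $T^{n+1}_i>0$ for all $i,l$; (3) (discrete entropy increasing) with $S^m_h=-\sum_{l=1}^M(c^{l,m},\log c^{l,m})+(\log T^m+1,C_T)$, \[ \frac{S^{n+1}_h-S^n_h}{\Delta t}\ \ge\ \varepsilon\sum_{l=1}^M\big(\nu^le^{\eta^{l,n+1/2}}|\check{\mathbf u}^{l,n+1/2}|^2,R^{n+1/2}\big)+k\sum_{\sigma\in\mathcal E_{int}}\tau_\sigma\,\mathcal A_\sigma\big(e^{\xi^{n+1/2}}\big)\,D(\log R^{n+1/2})_{i,\sigma}\,DR^{n+1/2}_{i,\sigma}\ \ge 0 . \]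
   Context: Mesh. $\Omega\subset\mathbb R^d$ is a bounded polygonal/polyhedral domain with $\partial\Omega=\Gamma_D\cup\Gamma_N$, $\Gamma_D\cap\Gamma_N=\emptyset$. A Voronoi finite-volume mesh consists of points $\mathbf x_1,\dots,\mathbf x_N$ and control volumes $V_i=\{\mathbf y\in\Omega:|\mathbf y-\mathbf x_i|<|\mathbf y-\mathbf x_j|\ \forall j\ne i\}$. An interior face is $\sigma=\partial V_i\cap\partial V_j$ of positive $(d-1)$-measure, written $\sigma=i|j$; $\mathcal E_{int}$ is the set of interior faces and $\mathcal E_{i,int}$ those of $V_i$; $\mathcal E^D_{i,ext}$, $\mathcal E^N_{i,ext}$ are the faces of $\partial V_i$ lying in $\Gamma_D$, resp. $\Gamma_N$. $\mathrm m(\cdot)$ is Lebesgue measure (in dimension $d$ or $d-1$); $d_\sigma=|\mathbf x_i-\mathbf x_j|$ for $\sigma=i|j$ and $d_\sigma=\mathrm{dist}(\mathbf x_i,\sigma)$ for exterior faces of $V_i$; $\tau_\sigma=\mathrm m(\sigma)/d_\sigma$. Grid functions are vectors $u=(u_1,\dots,u_N)\in\mathbb R^N$; for $\sigma=i|j$, $Du_{i,\sigma}=u_j-u_i$. For positive $u$ and $\sigma=i|j$, $\mathcal A_\sigma u=\frac{(\mathrm m(V_i)+\mathrm m(V_j))u_iu_j}{\mathrm m(V_i)u_j+\mathrm m(V_j)u_i}$ (harmonic average). The discrete inner product is $(f,g)=\sum_{i=1}^N\mathrm m(V_i)f_ig_i$; exponentials, logarithms, products and quotients of grid functions are taken componentwise.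 Scheme II (modified Crank–Nicolson in the variables $\eta^l=\log c^l$, $\xi=\log T$). Parameters: $\varepsilon>0$, $k>0$, $C_T>0$, $\Delta t>0$, $\nu^l>0$, $z^l\in\mathbb R$, a grid function $\rho^f$, Dirichlet data $\psi^D_\sigma$ on $\Gamma_D$-faces, Neumann data $g_\sigma$ on $\Gamma_N$-faces. Define $e^{f^{n+1/2}}:=e^{(f^n+f^{n+1})/2}$ for $f=\xi,\eta^l$, $\psi^{n+1/2}=\frac12(\psi^n+\psi^{n+1})$, and \[Q^{l}=\eta^{l,n+1}-\frac{e^{\eta^{l,n+1}}-e^{\eta^{l,n}}}{2e^{\eta^{l,n+1}}}-\frac{(e^{\eta^{l,n+1}}-e^{\eta^{l,n}})^2}{6e^{2\eta^{l,n+1}}},\qquad R^{n+1/2}=e^{-\xi^{n+1}}+\frac{e^{\xi^{n+1}}-e^{\xi^n}}{2e^{2\xi^{n+1}}}+\frac{(e^{\xi^{n+1}}-e^{\xi^n})^2}{3e^{3\xi^{n+1}}}.\] For $\sigma=i|j$ define the face flux \[G^l_{i,\sigma}=-\frac1{\nu^ld_\sigma}\Big[\mathcal A_\sigma\big(e^{\eta^{l,n+1/2}+\xi^{n+1/2}}\big)DQ^l_{i,\sigma}+\mathcal A_\sigma\big(e^{\eta^{l,n+1/2}}\big)D\big(z^l\psi^{n+1/2}+e^{\xi^{n+1/2}}\big)_{i,\sigma}\Big],\] with zero flux through exterior faces. The scheme reads, for $i=1,\dots,N$, $l=1,\dots,M$: (a) $\frac{e^{\eta^{l,n+1}_i}-e^{\eta^{l,n}_i}}{\Delta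 t}+\frac{\varepsilon}{\mathrm m(V_i)}\sum_{\sigma\in\mathcal E_{i,int}}\mathrm m(\sigma)G^l_{i,\sigma}=0$; (b) $-\frac{\varepsilon^2}{\mathrm m(V_i)}\Big[\sum_{\sigma\in\mathcal E_{i,int}}\tau_\sigma D\psi^{n+1}_{i,\sigma}+\sum_{\sigma\in\mathcal E^D_{i,ext}}\tau_\sigma(\psi^D_\sigma-\psi^{n+1}_i)\Big]-\frac1{\mathrm m(V_i)}\sum_{\sigma\in\mathcal E^N_{i,ext}}\mathrm m(\sigma)g_\sigma=\sum_lz^le^{\eta^{l,n+1}_i}+\rho^f_i$; (c) $C_T\frac{e^{\xi^{n+1}_i}-e^{\xi^n_i}}{\Delta t}=-\frac{k}{\mathrm m(V_i)}\sum_{\sigma\in\mathcal E_{i,int}}\tau_\sigma\mathcal A_\sigma(e^{\xi^{n+1/2}})D(\log R^{n+1/2})_{i,\sigma}+\frac{P_i}{R^{n+1/2}_i}+\varepsilon\sum_l\nu^le^{\eta^{l,n+1/2}_i}|\check{\mathbf u}^{l,n+1/2}_i|^2$ (thermally insulated: no exterior-face terms), where \[P_i=\sum_{l=1}^M\Big[\frac{\varepsilon}{\mathrm m(V_i)}\sum_{\sigma\in\mathcal E_{i,int}}\mathrm m(\sigma)G^l_{i,\sigma}Q^l_\sigma+(1+Q^l_i)\frac{e^{\eta^{l,n+1}_i}-e^{\eta^{l,n}_i}}{\Delta t}\Big],\] $Q^l_\sigma$ is a face value of $Q^l$ depending only on $\sigma$, and $\check{\mathbf u}^{l,n+1/2}_i\in\mathbb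 R^d$ are given cell-wise velocity reconstructions; $|\check{\mathbf u}^{l,n+1/2}|^2$ is the grid function $i\mapsto|\check{\mathbf u}^{l,n+1/2}_i|^2$. In the last sum of the claim $\sigma=i|j$ with either orientation (the product is orientation-independent). *)

theory Defs
  imports "HOL-Analysis.Analysis"
begin

text \<open>Abstract Voronoi finite-volume mesh: cells are indexed by 1..N, faces have an
  abstract type 'f. An interior face s joins the cells cl s and cr s.\<close>

definition nbr :: "('f \<Rightarrow> nat) \<Rightarrow> ('f \<Rightarrow> nat) \<Rightarrow> 'f \<Rightarrow> nat \<Rightarrow> nat" where
  "nbr cl cr s i = (if cl s = i then cr s else cl s)"

definition Dg :: "('f \<Rightarrow> nat) \<Rightarrow> ('f \<Rightarrow> nat) \<Rightarrow> (nat \<Rightarrow> real) \<Rightarrow> nat \<Rightarrow> 'f \<Rightarrow> real" where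
  "Dg cl cr u i s = u (nbr cl cr s i) - u i"

definition faces_of :: "'f set \<Rightarrow> ('f \<Rightarrow> nat) \<Rightarrow> ('f \<Rightarrow> nat) \<Rightarrow> nat \<Rightarrow> 'f set" where
  "faces_of E cl cr i = {s \<in> E. cl s = i \<or> cr s = i}"

definition harm_avg :: "(nat \<Rightarrow> real) \<Rightarrow> ('f \<Rightarrow> nat) \<Rightarrow> ('f \<Rightarrow> nat) \<Rightarrow> (nat \<Rightarrow> real) \<Rightarrow> 'f \<Rightarrow> real" where
  "harm_avg vol cl cr u s =
     (let i = cl s; j = cr s in (vol i + vol j) * u i * u j / (vol i * u j + vol j * u i))"

definition dip :: "(nat \<Rightarrow> real) \<Rightarrow> nat \<Rightarrow> (nat \<Rightarrow> real) \<Rightarrow> (nat \<Rightarrow> real) \<Rightarrow> real" where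
  "dip vol N f g = (\<Sum>i=1..N. vol i * f i * g i)"

definition half :: "(nat \<Rightarrow> real) \<Rightarrow> (nat \<Rightarrow> real) \<Rightarrow> nat \<Rightarrow> real" where
  "half f0 f1 i = (f0 i + f1 i) / 2"

definition Qcn :: "(nat \<Rightarrow> real) \<Rightarrow> (nat \<Rightarrow> real) \<Rightarrow> nat \<Rightarrow> real" where
  "Qcn eta0 eta1 i = eta1 i - (exp (eta1 i) - exp (eta0 i)) / (2 * exp (eta1 i))
      - (exp (eta1 i) - exp (eta0 i))^2 / (6 * exp (2 * eta1 i))"

definition Rcn :: "(nat \<Rightarrow> real) \<Rightarrow> (nat \<Rightarrow> real) \<Rightarrow> nat \<Rightarrow> real" where
  "Rcn xi0 xi1 i = exp (- xi1 i) + (exp (xi1 i) - exp (xi0 i)) / (2 * exp (2 * xi1 i))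
      + (exp (xi1 i) - exp (xi0 i))^2 / (3 * exp (3 * xi1 i))"

definition flux :: "(nat \<Rightarrow> real) \<Rightarrow> ('f \<Rightarrow> nat) \<Rightarrow> ('f \<Rightarrow> nat) \<Rightarrow> ('f \<Rightarrow> real) \<Rightarrow> real \<Rightarrow> real
    \<Rightarrow> (nat \<Rightarrow> real) \<Rightarrow> (nat \<Rightarrow> real) \<Rightarrow> (nat \<Rightarrow> real) \<Rightarrow> (nat \<Rightarrow> real)
    \<Rightarrow> (nat \<Rightarrow> real) \<Rightarrow> (nat \<Rightarrow> real) \<Rightarrow> nat \<Rightarrow> 'f \<Rightarrow> real" where
  "flux vol cl cr d nu z eta0 eta1 xi0 xi1 psi0 psi1 i s =
     - (1 / (nu * d s)) *
       (harm_avg vol cl cr (\<lambda>j. exp (half eta0 eta1 j + half xi0 xi1 j)) s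
          * Dg cl cr (Qcn eta0 eta1) i s
        + harm_avg vol cl cr (\<lambda>j. exp (half eta0 eta1 j)) s
          * Dg cl cr (\<lambda>j. z * half psi0 psi1 j + exp (half xi0 xi1 j)) i s)"

definition entropy :: "(nat \<Rightarrow> real) \<Rightarrow> nat \<Rightarrow> nat \<Rightarrow> (nat \<Rightarrow> nat \<Rightarrow> real) \<Rightarrow> (nat \<Rightarrow> real) \<Rightarrow> real \<Rightarrow> real" where
  "entropy vol N M c T CT =
     - (\<Sum>l=1..M. dip vol N (c l) (\<lambda>i. ln (c l i))) + dip vol N (\<lambda>i. ln (T i) + 1) (\<lambda>_. CT)"

end

theory Submission
  imports Defs
begin

lemma cube_nonpos: "(a::real) \<le> 0 \<Longrightarrow> a^3 \<le> 0"
  by (simp add: power3_eq_cube mult_nonneg_nonpos)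

lemma chi_deriv:
  fixes t :: real assumes t: "t > 0"
  shows "((\<lambda>t. ln t + ((1-t) - (1-t)^2/2 - (1-t)^3/6)/t) has_real_derivative (- ((1-t)^3/(3*t^2)))) (at t)"
proof -
  have "((\<lambda>t. ln t + ((1-t) - (1-t)^2/2 - (1-t)^3/6)/t) has_real_derivative
     (1/t + ((-1 + (1-t) + (1-t)^2/2) * t - ((1-t) - (1-t)^2/2 - (1-t)^3/6)) / t^2)) (at t)"
    using t by (auto intro!: derivative_eq_intros simp: power2_eq_square field_simps)
  moreover have "1/t + ((-1 + (1-t) + (1-t)^2/2) * t - ((1-t) - (1-t)^2/2 - (1-t)^3/6)) / t^2
        = - ((1-t)^3/(3*t^2))" using t by (simp add: field_simps power2_eq_square power3_eq_cube)
  ultimately show ?thesis by simp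
qed

lemma chi_nonneg:
  fixes t :: real assumes t: "t > 0"
  shows "ln t + ((1-t) - (1-t)^2/2 - (1-t)^3/6)/t \<ge> 0"
proof -
  let ?g = "\<lambda>t::real. ln t + ((1-t) - (1-t)^2/2 - (1-t)^3/6)/t"
  have g1: "?g 1 = 0" by simp
  show ?thesis
  proof (cases "t \<le> 1")
    case True
    have "?g 1 \<le> ?g t"
      by (rule deriv_nonpos_imp_antimono[where g = ?g and a=t and b=1 and g' = "\<lambda>t. - ((1-t)^3/(3*t^2))"])
         (use t True in \<open>auto intro!: chi_deriv simp: divide_nonpos_pos\<close>)
    with g1 show ?thesis by simp
  next
    case False
    have "?g 1 \<le> ?g t"
      by (rule deriv_nonneg_imp_mono[where g = ?g and a=1 and b=t and g' = "\<lambda>t. - ((1-t)^3/(3*t^2))"])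
         (use t False in \<open>auto intro!: chi_deriv divide_nonpos_pos cube_nonpos\<close>)
    with g1 show ?thesis by simp
  qed
qed

lemma psi_deriv:
  fixes t :: real assumes t: "t > 0"
  shows "((\<lambda>t. - ln t - (1-t) - (1-t)^2/2 - (1-t)^3/3) has_real_derivative (- ((1-t)^3/t))) (at t)"
proof -
  have "((\<lambda>t. - ln t - (1-t) - (1-t)^2/2 - (1-t)^3/3) has_real_derivative
     (-1/t + 1 + (1-t) + (1-t)^2)) (at t)"
    using t by (auto intro!: derivative_eq_intros simp: power2_eq_square field_simps)
  moreover have "-1/t + 1 + (1-t) + (1-t)^2 = - ((1-t)^3/t)" using t
    by (simp add: field_simps power2_eq_square power3_eq_cube)
  ultimately show ?thesis by simp
qed

lemma psi_nonneg:
  fixes t :: real assumes t: "t > 0"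
  shows "- ln t - (1-t) - (1-t)^2/2 - (1-t)^3/3 \<ge> 0"
proof -
  let ?g = "\<lambda>t::real. - ln t - (1-t) - (1-t)^2/2 - (1-t)^3/3"
  have g1: "?g 1 = 0" by simp
  show ?thesis
  proof (cases "t \<le> 1")
    case True
    have "?g 1 \<le> ?g t"
      by (rule deriv_nonpos_imp_antimono[where g = ?g and a=t and b=1 and g' = "\<lambda>t. - ((1-t)^3/t)"])
         (use t True in \<open>auto intro!: psi_deriv simp: divide_nonpos_pos\<close>)
    with g1 show ?thesis by simp
  next
    case False
    have "?g 1 \<le> ?g t"
      by (rule deriv_nonneg_imp_mono[where g = ?g and a=1 and b=t and g' = "\<lambda>t. - ((1-t)^3/t)"])
         (use t False in \<open>auto intro!: psi_deriv divide_nonpos_pos cube_nonpos\<close>)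
    with g1 show ?thesis by simp
  qed
qed

lemma ineqA:
  fixes a b :: real assumes a: "a > 0" and b: "b > 0"
  shows "b * ln b - a * ln a \<le> (1 + (ln b - (b-a)/(2*b) - (b-a)^2/(6*b^2))) * (b-a)"
proof -
  define u where "u = (b-a)/b"
  have t: "a/b > 0" using a b by simp
  have 1: "1 - a/b = u" using b by (simp add: u_def field_simps)
  have h: "ln (a/b) + (u - u^2/2 - u^3/6)/(a/b) \<ge> 0" using chi_nonneg[OF t] by (simp add: 1)
  have h2: "a * (ln (a/b) + (u - u^2/2 - u^3/6)/(a/b)) \<ge> 0" using h a by simp
  have e: "a * (ln (a/b) + (u - u^2/2 - u^3/6)/(a/b)) = a * (ln a - ln b) + b * (u - u^2/2 - u^3/6)"
    using a b by (simp add: ln_div field_simps)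
  have e2: "b * (u - u^2/2 - u^3/6) = (b-a) - (b-a)^2/(2*b) - (b-a)^3/(6*b^2)"
    using b by (simp add: u_def field_simps power2_eq_square power3_eq_cube)
  have "(1 + (ln b - (b-a)/(2*b) - (b-a)^2/(6*b^2))) * (b-a) - (b * ln b - a * ln a)
     = a * (ln a - ln b) + ((b-a) - (b-a)^2/(2*b) - (b-a)^3/(6*b^2))"
    using b by (simp add: field_simps power2_eq_square power3_eq_cube)
  then show ?thesis using h2 e e2 by linarith
qed

lemma ineqB:
  fixes a b :: real assumes a: "a > 0" and b: "b > 0"
  shows "(1/b + (b-a)/(2*b^2) + (b-a)^2/(3*b^3)) * (b-a) \<le> ln b - ln a"
proof -
  define u where "u = (b-a)/b"
  have t: "a/b > 0" using a b by simp
  have 1: "1 - a/b = u" using b by (simp add: u_def field_simps)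
  have h: "- ln (a/b) - u - u^2/2 - u^3/3 \<ge> 0" using psi_nonneg[OF t] by (simp add: 1)
  have e: "(1/b + (b-a)/(2*b^2) + (b-a)^2/(3*b^3)) * (b-a) = u + u^2/2 + u^3/3"
    using b by (simp add: u_def field_simps power2_eq_square power3_eq_cube)
  show ?thesis using h e a b by (simp add: ln_div)
qed

lemma Rpos:
  fixes a b :: real assumes b: "b > 0"
  shows "1/b + (b-a)/(2*b^2) + (b-a)^2/(3*b^3) > 0"
proof -
  define u where "u = (b-a)/b"
  have e: "1/b + (b-a)/(2*b^2) + (b-a)^2/(3*b^3) = (1 + u/2 + u^2/3)/b"
    using b by (simp add: u_def field_simps power2_eq_square power3_eq_cube)
  have "1 + u/2 + u^2/3 > 0"
  proof -
    have "0 \<le> (u + 3/4)^2" by simp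
    then show ?thesis by (simp add: power2_eq_square algebra_simps)
  qed
  then show ?thesis using e b by simp
qed

lemma R_eq: "Rcn xi0 xi1 i = 1/exp(xi1 i) + (exp(xi1 i) - exp(xi0 i))/(2*exp(xi1 i)^2)
     + (exp(xi1 i) - exp(xi0 i))^2/(3*exp(xi1 i)^3)"
proof -
  have "exp(3 * xi1 i) = exp(xi1 i)^3" using exp_of_nat_mult[of 3 "xi1 i"] by simp
  then show ?thesis unfolding Rcn_def by (simp add: exp_double exp_minus inverse_eq_divide)
qed

lemma Q_eq: "Qcn eta0 eta1 i = eta1 i - (exp(eta1 i) - exp(eta0 i))/(2*exp(eta1 i))
     - (exp(eta1 i) - exp(eta0 i))^2/(6*exp(eta1 i)^2)"
  unfolding Qcn_def by (simp add: exp_double)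

lemma R_pos: "Rcn xi0 xi1 i > 0"
  unfolding R_eq by (rule Rpos) simp

lemma face_sum:
  fixes f :: "nat \<Rightarrow> 'f \<Rightarrow> real"
  assumes fin: "finite E"
    and cells: "\<And>s. s \<in> E \<Longrightarrow> cl s \<in> {1..N} \<and> cr s \<in> {1..N} \<and> cl s \<noteq> cr s"
  shows "(\<Sum>i=1..N. \<Sum>s\<in>faces_of E cl cr i. f i s) = (\<Sum>s\<in>E. f (cl s) s + f (cr s) s)"
proof -
  have 1: "(\<Sum>s\<in>faces_of E cl cr i. f i s)
     = (\<Sum>s\<in>E. (if cl s = i then f i s else 0) + (if cr s = i then f i s else 0))" for i
  proof -
    have "(\<Sum>s\<in>faces_of E cl cr i. f i s) = (\<Sum>s\<in>E. if cl s = i \<or> cr s = i then f i s else 0)"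
      unfolding faces_of_def using fin by (simp add: sum.inter_filter)
    also have "\<dots> = (\<Sum>s\<in>E. (if cl s = i then f i s else 0) + (if cr s = i then f i s else 0))"
      by (rule sum.cong) (use cells in auto)
    finally show ?thesis .
  qed
  have "(\<Sum>i=1..N. \<Sum>s\<in>faces_of E cl cr i. f i s)
      = (\<Sum>s\<in>E. \<Sum>i=1..N. (if cl s = i then f i s else 0) + (if cr s = i then f i s else 0))"
    unfolding 1 by (rule sum.swap)
  also have "\<dots> = (\<Sum>s\<in>E. f (cl s) s + f (cr s) s)"
  proof (rule sum.cong)
    fix s assume s: "s \<in> E"
    have a: "(\<Sum>i=1..N. (if cl s = i then f i s else 0)) = f (cl s) s"
      using cells[OF s] by (simp add: sum.delta cong: if_cong)
    have b: "(\<Sum>i=1..N. (if cr s = i then f i s else 0)) = f (cr s) s"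
      using cells[OF s] by (simp add: sum.delta cong: if_cong)
    show "(\<Sum>i=1..N. (if cl s = i then f i s else 0) + (if cr s = i then f i s else 0)) = f (cl s) s + f (cr s) s"
      using a b by (simp add: sum.distrib)
  qed simp
  finally show ?thesis .
qed

lemma Dg_swap: "cl s \<noteq> cr s \<Longrightarrow> Dg cl cr u (cr s) s = - Dg cl cr u (cl s) s"
  unfolding Dg_def nbr_def by simp

lemma flux_swap: "cl s \<noteq> cr s \<Longrightarrow>
   flux vol cl cr d nu z eta0 eta1 xi0 xi1 psi0 psi1 (cr s) s
   = - flux vol cl cr d nu z eta0 eta1 xi0 xi1 psi0 psi1 (cl s) s"
  unfolding flux_def by (simp add: Dg_swap algebra_simps)

theorem theorem3p4:
  fixes N M :: nat
    and x :: "nat \<Rightarrow> 'v::euclidean_space"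
    and vol :: "nat \<Rightarrow> real"
    and Eint :: "'f set" and ED EN :: "nat \<Rightarrow> 'f set"
    and cl cr :: "'f \<Rightarrow> nat"
    and mf d :: "'f \<Rightarrow> real"
    and eps k CT dt :: real
    and nu z :: "nat \<Rightarrow> real"
    and rhof :: "nat \<Rightarrow> real"
    and psiD g :: "'f \<Rightarrow> real"
    and eta0 eta1 :: "nat \<Rightarrow> nat \<Rightarrow> real"
    and psi0 psi1 xi0 xi1 :: "nat \<Rightarrow> real"
    and Qf :: "nat \<Rightarrow> 'f \<Rightarrow> real"
    and uc :: "nat \<Rightarrow> nat \<Rightarrow> 'v"
  defines "tau \<equiv> (\<lambda>s. mf s / d s)"
    and "G \<equiv> (\<lambda>l. flux vol cl cr d (nu l) (z l) (eta0 l) (eta1 l) xi0 xi1 psi0 psi1)"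
    and "Q \<equiv> (\<lambda>l. Qcn (eta0 l) (eta1 l))"
    and "R \<equiv> Rcn xi0 xi1"
    and "eT \<equiv> (\<lambda>i. exp (half xi0 xi1 i))"
  assumes mesh_pts: "inj_on x {1..N}"
    and mesh_vol: "\<And>i. i \<in> {1..N} \<Longrightarrow> vol i > 0"
    and mesh_fin: "finite Eint"
    and mesh_cells: "\<And>s. s \<in> Eint \<Longrightarrow> cl s \<in> {1..N} \<and> cr s \<in> {1..N} \<and> cl s \<noteq> cr s"
    and mesh_unique: "inj_on (\<lambda>s. {cl s, cr s}) Eint"
    and mesh_dint: "\<And>s. s \<in> Eint \<Longrightarrow> d s = dist (x (cl s)) (x (cr s))"
    and mesh_ext: "\<And>i. i \<in> {1..N} \<Longrightarrow> finite (ED i) \<and> finite (EN i) \<and> ED i \<inter> EN i = {}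
                     \<and> ED i \<inter> Eint = {} \<and> EN i \<inter> Eint = {}"
    and mesh_mf: "\<And>s. s \<in> Eint \<union> (\<Union>i\<in>{1..N}. ED i \<union> EN i) \<Longrightarrow> mf s > 0 \<and> d s > 0"
    and par: "eps > 0" "k > 0" "CT > 0" "dt > 0"
    and nu_pos: "\<And>l. l \<in> {1..M} \<Longrightarrow> nu l > 0"
    and scheme_a: "\<And>i l. i \<in> {1..N} \<Longrightarrow> l \<in> {1..M} \<Longrightarrow>
        (exp (eta1 l i) - exp (eta0 l i)) / dt
        + eps / vol i * (\<Sum>s\<in>faces_of Eint cl cr i. mf s * G l i s) = 0"
    and scheme_b: "\<And>i. i \<in> {1..N} \<Longrightarrow>
        - (eps^2 / vol i) * ((\<Sum>s\<in>faces_of Eint cl cr i. tau s * Dg cl cr psi1 i s)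
                            + (\<Sum>s\<in>ED i. tau s * (psiD s - psi1 i)))
        - (1 / vol i) * (\<Sum>s\<in>EN i. mf s * g s)
        = (\<Sum>l=1..M. z l * exp (eta1 l i)) + rhof i"
    and scheme_c: "\<And>i. i \<in> {1..N} \<Longrightarrow>
        CT * (exp (xi1 i) - exp (xi0 i)) / dt
        = - (k / vol i) * (\<Sum>s\<in>faces_of Eint cl cr i.
                 tau s * harm_avg vol cl cr eT s * Dg cl cr (\<lambda>j. ln (R j)) i s)
          + (\<Sum>l=1..M. eps / vol i * (\<Sum>s\<in>faces_of Eint cl cr i. mf s * G l i s * Qf l s)
                       + (1 + Q l i) * (exp (eta1 l i) - exp (eta0 l i)) / dt) / R i
          + eps * (\<Sum>l=1..M. nu l * exp (half (eta0 l) (eta1 l) i) * (norm (uc l i))^2)"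
  shows "(\<forall>l\<in>{1..M}. dip vol N (\<lambda>i. exp (eta1 l i)) (\<lambda>_. 1)
                    = dip vol N (\<lambda>i. exp (eta0 l i)) (\<lambda>_. 1))
     \<and> (\<forall>i\<in>{1..N}. (\<forall>l\<in>{1..M}. exp (eta1 l i) > 0) \<and> exp (xi1 i) > 0)
     \<and> (entropy vol N M (\<lambda>l i. exp (eta1 l i)) (\<lambda>i. exp (xi1 i)) CT
          - entropy vol N M (\<lambda>l i. exp (eta0 l i)) (\<lambda>i. exp (xi0 i)) CT) / dt
        \<ge> eps * (\<Sum>l=1..M. dip vol N
                   (\<lambda>i. nu l * exp (half (eta0 l) (eta1 l) i) * (norm (uc l i))^2) R)
          + k * (\<Sum>s\<in>Eint. tau s * harm_avg vol cl cr eT s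
                   * Dg cl cr (\<lambda>j. ln (R j)) (cl s) s * Dg cl cr R (cl s) s)
     \<and> eps * (\<Sum>l=1..M. dip vol N
                   (\<lambda>i. nu l * exp (half (eta0 l) (eta1 l) i) * (norm (uc l i))^2) R)
          + k * (\<Sum>s\<in>Eint. tau s * harm_avg vol cl cr eT s
                   * Dg cl cr (\<lambda>j. ln (R j)) (cl s) s * Dg cl cr R (cl s) s) \<ge> 0"
proof -
  have fs: "\<And>f :: nat \<Rightarrow> 'f \<Rightarrow> real. (\<Sum>i=1..N. \<Sum>s\<in>faces_of Eint cl cr i. f i s)
      = (\<Sum>s\<in>Eint. f (cl s) s + f (cr s) s)"
    by (rule face_sum[OF mesh_fin mesh_cells])
  have Gsw: "\<And>l s. s \<in> Eint \<Longrightarrow> G l (cr s) s = - G l (cl s) s"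
    unfolding G_def using mesh_cells by (simp add: flux_swap)
  have dt0: "dt \<noteq> 0" using par by simp
  have Rp: "\<And>i. R i > 0" unfolding R_def by (rule R_pos)
  have mass: "\<forall>l\<in>{1..M}. dip vol N (\<lambda>i. exp (eta1 l i)) (\<lambda>_. 1)
                    = dip vol N (\<lambda>i. exp (eta0 l i)) (\<lambda>_. 1)"
  proof
    fix l assume l: "l \<in> {1..M}"
    have a: "vol i * exp (eta1 l i) - vol i * exp (eta0 l i)
        = - (dt * eps) * (\<Sum>s\<in>faces_of Eint cl cr i. mf s * G l i s)" if i: "i \<in> {1..N}" for i
    proof -
      have v: "vol i > 0" using mesh_vol i by simp
      from scheme_a[OF i l] v par show ?thesis by (simp add: field_simps)
    qed
    have "dip vol N (\<lambda>i. exp (eta1 l i)) (\<lambda>_. 1) - dip vol N (\<lambda>i. exp (eta0 l i)) (\<lambda>_. 1)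
        = (\<Sum>i=1..N. vol i * exp (eta1 l i) - vol i * exp (eta0 l i))"
      unfolding dip_def by (simp add: sum_subtractf)
    also have "\<dots> = (\<Sum>i=1..N. - (dt * eps) * (\<Sum>s\<in>faces_of Eint cl cr i. mf s * G l i s))"
      by (rule sum.cong) (auto simp: a)
    also have "\<dots> = - (dt * eps) * (\<Sum>i=1..N. \<Sum>s\<in>faces_of Eint cl cr i. mf s * G l i s)"
      by (simp add: sum_distrib_left)
    also have "\<dots> = - (dt * eps) * (\<Sum>s\<in>Eint. mf s * G l (cl s) s + mf s * G l (cr s) s)"
      by (simp only: fs)
    also have "\<dots> = 0" by (simp add: Gsw)
    finally show "dip vol N (\<lambda>i. exp (eta1 l i)) (\<lambda>_. 1) = dip vol N (\<lambda>i. exp (eta0 l i)) (\<lambda>_. 1)"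
      by simp
  qed
  have pos: "\<forall>i\<in>{1..N}. (\<forall>l\<in>{1..M}. exp (eta1 l i) > 0) \<and> exp (xi1 i) > 0" by simp
  define W1 where "W1 = eps * (\<Sum>l=1..M. dip vol N
                   (\<lambda>i. nu l * exp (half (eta0 l) (eta1 l) i) * (norm (uc l i))^2) R)"
  define W2 where "W2 = k * (\<Sum>s\<in>Eint. tau s * harm_avg vol cl cr eT s
                   * Dg cl cr (\<lambda>j. ln (R j)) (cl s) s * Dg cl cr R (cl s) s)"
  define Lc where "Lc i = vol i * (CT * (xi1 i - xi0 i)
       - (\<Sum>l=1..M. exp (eta1 l i) * eta1 l i - exp (eta0 l i) * eta0 l i))" for i
  define S1 where "S1 i = (\<Sum>s\<in>faces_of Eint cl cr i.
                 tau s * harm_avg vol cl cr eT s * Dg cl cr (\<lambda>j. ln (R j)) i s)" for i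
  define S2 where "S2 i = (\<Sum>l=1..M. \<Sum>s\<in>faces_of Eint cl cr i. mf s * G l i s * Qf l s)" for i
  define S3 where "S3 i = (\<Sum>l=1..M. nu l * exp (half (eta0 l) (eta1 l) i) * (norm (uc l i))^2)" for i
  define B where "B i = - k * R i * S1 i + eps * S2 i + eps * vol i * R i * S3 i" for i
  have ent: "entropy vol N M (\<lambda>l i. exp (eta1 l i)) (\<lambda>i. exp (xi1 i)) CT
          - entropy vol N M (\<lambda>l i. exp (eta0 l i)) (\<lambda>i. exp (xi0 i)) CT = (\<Sum>i=1..N. Lc i)"
  proof -
    have e1: "entropy vol N M (\<lambda>l i. exp (e l i)) (\<lambda>i. exp (xx i)) CT
       = (\<Sum>i=1..N. vol i * (CT * (xx i + 1) - (\<Sum>l=1..M. exp (e l i) * e l i)))" for e xx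
    proof -
      have "(\<Sum>l=1..M. \<Sum>i=1..N. vol i * exp (e l i) * e l i) = (\<Sum>i=1..N. \<Sum>l=1..M. vol i * exp (e l i) * e l i)"
        by (rule sum.swap)
      then show ?thesis unfolding entropy_def dip_def
        by (simp add: sum_subtractf sum_distrib_left algebra_simps)
    qed
    show ?thesis unfolding e1 Lc_def sum_subtractf[symmetric] by (rule sum.cong) (simp_all add: sum_subtractf algebra_simps)
  qed
  have cell: "Lc i / dt \<ge> B i" if i: "i \<in> {1..N}" for i
  proof -
    have v: "vol i > 0" using mesh_vol i by simp
    define X where "X = vol i * (CT * R i * (exp (xi1 i) - exp (xi0 i))
        - (\<Sum>l=1..M. (1 + Q l i) * (exp (eta1 l i) - exp (eta0 l i)))) / dt"
    have hB: "R i * (exp (xi1 i) - exp (xi0 i)) \<le> xi1 i - xi0 i"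
      using ineqB[of "exp (xi0 i)" "exp (xi1 i)"] unfolding R_def R_eq by simp
    have hA: "exp (eta1 l i) * eta1 l i - exp (eta0 l i) * eta0 l i
        \<le> (1 + Q l i) * (exp (eta1 l i) - exp (eta0 l i))" for l
      using ineqA[of "exp (eta0 l i)" "exp (eta1 l i)"] unfolding Q_def Q_eq by (simp add: mult.commute)
    have "(\<Sum>l=1..M. exp (eta1 l i) * eta1 l i - exp (eta0 l i) * eta0 l i)
       \<le> (\<Sum>l=1..M. (1 + Q l i) * (exp (eta1 l i) - exp (eta0 l i)))"
      by (rule sum_mono) (rule hA)
    moreover have "CT * (R i * (exp (xi1 i) - exp (xi0 i))) \<le> CT * (xi1 i - xi0 i)"
      using hB par by (simp add: mult_left_mono)
    ultimately have "CT * R i * (exp (xi1 i) - exp (xi0 i))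
        - (\<Sum>l=1..M. (1 + Q l i) * (exp (eta1 l i) - exp (eta0 l i)))
        \<le> CT * (xi1 i - xi0 i) - (\<Sum>l=1..M. exp (eta1 l i) * eta1 l i - exp (eta0 l i) * eta0 l i)"
      by (simp add: mult.assoc)
    then have "X \<le> Lc i / dt" unfolding X_def Lc_def using v par
      by (simp add: divide_right_mono mult_left_mono)
    moreover have "X = B i"
    proof -
      have sc: "CT * (exp (xi1 i) - exp (xi0 i)) / dt = - (k / vol i) * S1 i
          + (\<Sum>l=1..M. eps / vol i * (\<Sum>s\<in>faces_of Eint cl cr i. mf s * G l i s * Qf l s)
                       + (1 + Q l i) * (exp (eta1 l i) - exp (eta0 l i)) / dt) / R i
          + eps * S3 i"
        using scheme_c[OF i] unfolding S1_def S3_def by simp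
      have P: "vol i * (\<Sum>l=1..M. eps / vol i * (\<Sum>s\<in>faces_of Eint cl cr i. mf s * G l i s * Qf l s)
                       + (1 + Q l i) * (exp (eta1 l i) - exp (eta0 l i)) / dt)
           = eps * S2 i + vol i * (\<Sum>l=1..M. (1 + Q l i) * (exp (eta1 l i) - exp (eta0 l i))) / dt"
        unfolding S2_def using v
        by (simp add: sum_distrib_left sum.distrib sum_divide_distrib field_simps)
      have "X = vol i * R i * (CT * (exp (xi1 i) - exp (xi0 i)) / dt)
             - vol i * (\<Sum>l=1..M. (1 + Q l i) * (exp (eta1 l i) - exp (eta0 l i))) / dt"
      proof -
        have gen: "\<And>v C r e S t. (t::real) \<noteq> 0 \<Longrightarrow> v * (C * r * e - S) / t = v * r * (C * e / t) - v * S / t"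
          by (simp add: field_simps)
        show ?thesis unfolding X_def by (rule gen[OF dt0])
      qed
      also have "\<dots> = - k * R i * S1 i + R i * (vol i * (\<Sum>l=1..M. eps / vol i * (\<Sum>s\<in>faces_of Eint cl cr i. mf s * G l i s * Qf l s)
                       + (1 + Q l i) * (exp (eta1 l i) - exp (eta0 l i)) / dt) / R i)
             + eps * vol i * R i * S3 i
             - vol i * (\<Sum>l=1..M. (1 + Q l i) * (exp (eta1 l i) - exp (eta0 l i))) / dt"
        unfolding sc using v by (simp add: algebra_simps)
      also have "\<dots> = B i"
      proof -
        have rr: "R i * (Y / R i) = Y" for Y using Rp[of i] by simp
        show ?thesis unfolding P B_def rr by (simp add: algebra_simps)
      qed
      finally show ?thesis .
    qed
    ultimately show ?thesis by simp
  qed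
  have sumB: "(\<Sum>i=1..N. B i) = W1 + W2"
  proof -
    have b1: "(\<Sum>i=1..N. - k * R i * S1 i) = W2"
    proof -
      have "(\<Sum>i=1..N. - k * R i * S1 i) = - k * (\<Sum>i=1..N. \<Sum>s\<in>faces_of Eint cl cr i.
           R i * (tau s * harm_avg vol cl cr eT s * Dg cl cr (\<lambda>j. ln (R j)) i s))"
        unfolding S1_def by (simp add: sum_distrib_left mult.assoc)
      also have "\<dots> = - k * (\<Sum>s\<in>Eint. R (cl s) * (tau s * harm_avg vol cl cr eT s * Dg cl cr (\<lambda>j. ln (R j)) (cl s) s)
           + R (cr s) * (tau s * harm_avg vol cl cr eT s * Dg cl cr (\<lambda>j. ln (R j)) (cr s) s))"
        by (simp only: fs)
      also have "\<dots> = W2" unfolding W2_def sum_distrib_left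
        by (rule sum.cong) (use mesh_cells in \<open>auto simp: Dg_def nbr_def algebra_simps\<close>)
      finally show ?thesis .
    qed
    have b2: "(\<Sum>i=1..N. eps * S2 i) = 0"
    proof -
      have "(\<Sum>i=1..N. S2 i) = (\<Sum>l=1..M. \<Sum>i=1..N. \<Sum>s\<in>faces_of Eint cl cr i. mf s * G l i s * Qf l s)"
        unfolding S2_def by (rule sum.swap)
      also have "\<dots> = (\<Sum>l=1..M. \<Sum>s\<in>Eint. mf s * G l (cl s) s * Qf l s + mf s * G l (cr s) s * Qf l s)"
        by (simp only: fs)
      also have "\<dots> = 0" by (simp add: Gsw)
      finally show ?thesis by (simp add: sum_distrib_left[symmetric])
    qed
    have b3: "(\<Sum>i=1..N. eps * vol i * R i * S3 i) = W1"
    proof -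
      have "(\<Sum>i=1..N. eps * vol i * R i * S3 i)
         = eps * (\<Sum>i=1..N. \<Sum>l=1..M. vol i * (nu l * exp (half (eta0 l) (eta1 l) i) * (norm (uc l i))^2) * R i)"
        unfolding S3_def by (simp add: sum_distrib_left sum_distrib_right algebra_simps)
      also have "\<dots> = W1" unfolding W1_def dip_def by (subst sum.swap) (simp add: mult.assoc)
      finally show ?thesis .
    qed
    have "(\<Sum>i=1..N. B i) = (\<Sum>i=1..N. - k * R i * S1 i) + (\<Sum>i=1..N. eps * S2 i)
        + (\<Sum>i=1..N. eps * vol i * R i * S3 i)" unfolding B_def by (simp only: sum.distrib)
    then show ?thesis using b1 b2 b3 by simp
  qed
  have main: "(\<Sum>i=1..N. Lc i) / dt \<ge> W1 + W2"
  proof -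
    have "(\<Sum>i=1..N. B i) \<le> (\<Sum>i=1..N. Lc i / dt)" by (rule sum_mono) (rule cell, simp)
    then show ?thesis using sumB by (simp add: sum_divide_distrib)
  qed
  have W1nn: "W1 \<ge> 0" unfolding W1_def dip_def
    using par nu_pos mesh_vol Rp
    by (intro mult_nonneg_nonneg sum_nonneg) (auto intro!: mult_nonneg_nonneg less_imp_le)
  have W2nn: "W2 \<ge> 0" unfolding W2_def
  proof (intro mult_nonneg_nonneg[of k] sum_nonneg)
    show "0 \<le> k" using par by simp
    fix s assume s: "s \<in> Eint"
    have c: "cl s \<in> {1..N}" "cr s \<in> {1..N}" "cl s \<noteq> cr s" using mesh_cells[OF s] by auto
    have "mf s > 0 \<and> d s > 0" using mesh_mf s by blast
    then have t0: "0 \<le> tau s" unfolding tau_def by simp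
    have "vol (cl s) > 0" "vol (cr s) > 0" using mesh_vol c by auto
    moreover have "eT j > 0" for j unfolding eT_def by simp
    ultimately have h0: "0 \<le> harm_avg vol cl cr eT s" unfolding harm_avg_def Let_def
      by (intro divide_nonneg_pos mult_nonneg_nonneg add_pos_pos mult_pos_pos less_imp_le) auto
    have mono: "(ln y - ln x) * (y - x) \<ge> 0" if "x > 0" "y > 0" for x y :: real
    proof (cases "x \<le> y")
      case True then show ?thesis using that by (intro mult_nonneg_nonneg) auto
    next
      case False then show ?thesis using that by (intro mult_nonpos_nonpos) auto
    qed
    have "0 \<le> Dg cl cr (\<lambda>j. ln (R j)) (cl s) s * Dg cl cr R (cl s) s"
      unfolding Dg_def nbr_def using mono[OF Rp Rp] by simp
    then have "0 \<le> (tau s * harm_avg vol cl cr eT s) * (Dg cl cr (\<lambda>j. ln (R j)) (cl s) s * Dg cl cr R (cl s) s)"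
      using t0 h0 by (metis mult_nonneg_nonneg)
    then show "0 \<le> tau s * harm_avg vol cl cr eT s * Dg cl cr (\<lambda>j. ln (R j)) (cl s) s * Dg cl cr R (cl s) s"
      by (simp add: mult.assoc)
  qed
  show ?thesis using mass pos ent main W1nn W2nn unfolding W1_def W2_def by simp
qed

end
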